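(* Let $A=\begin{bmatrix}T_{SS}&T_{SR}\\ 0&T_{RR}\end{bmatrix}\in\mathbb{R}^{N\times N}$ be a combination matrix of the weakly-connected form described in the context. Then $I-T_{RR}$ is invertible and the limit $\lim_{n\to\infty}A^n$ exists and equals $$A_\infty=\begin{bmatrix}\Theta & \Theta W\\ 0 & 0\end{bmatrix},\qquad W=T_{SR}(I-T_{RR})^{-1},\qquad \Theta=\mathrm{blockdiag}\{p_1\mathbb{1}_{N_1}^{\mathsf T},\dots,p_S\mathbb{1}_{N_S}^{\mathsf T}\},$$ where $p_s$ is the Perron vector of $A_s$ and $\mathbb{1}_{N_s}$ is the all-ones vector of length $N_s$.
   Context: $N$ agents are partitioned into sub-networks $1,\dots,S+R$ ($S\ge 1$), sub-network $j$ having $N_j$ agents; agents are numbered so that those of sub-networks $1,\dots,S$ (group $S$, $N_{gS}=N_1+\cdots+N_S$ agents) come first, followed by those of sub-networks $S+1,\dots,S+R$ (group $R$, $N_{gR}=N_{S+1}+\cdots+N_{S+R}$ agents). The combination matrix $A=[a_{\ell k}]$ has nonnegative entries, is left-stochastic ($\sum_{\ell}a_{\ell k}=1$ for every $k$, i.e. $A^{\mathsf T}\mathbb{1}=\mathbb{1}$), and has the block form $A=\begin{bmatrix}T_{SS}&T_{SR}\\0&T_{RR}\end{bmatrix}$ with $T_{SS}\in\mathbb{R}^{N_{gS}\times N_{gS}}$, $T_{RR}\in\mathbb{R}^{N_{gR}\times N_{gR}}$. Here $T_{SS}=\mathrm{blockdiag}\{A_1,\dots,A_S\}$ where each $A_s\in\mathbb{R}^{N_s\times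 N_s}$ is left-stochastic and primitive (sub-network $s$ is strongly connected). $T_{RR}$ is block upper triangular with diagonal blocks $A_{S+1},\dots,A_{S+R}$, where $A_r\in\mathbb{R}^{N_r\times N_r}$ contains the weights on edges internal to sub-network $r$; each sub-network $r$ of group $R$ is connected (so $A_r$ is a nonnegative irreducible matrix) and receives information from agents outside it, so that at least one column of $A_r$ sums to a number strictly smaller than one. For $s=1,\dots,S$, the Perron vector $p_s$ of $A_s$ is the unique vector with $A_sp_s=p_s$, $\mathbb{1}^{\mathsf T}p_s=1$, and all entries positive. *)

theory Defs
  imports Complex_Main "Jordan_Normal_Form.Gauss_Jordan_Elimination"
begin

definition nonneg_mat :: "real mat \<Rightarrow> bool" where
  "nonneg_mat M \<longleftrightarrow> (\<forall>i<dim_row M. \<forall>k<dim_col M. M $$ (i,k) \<ge> 0)"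

definition irreducible_mat :: "real mat \<Rightarrow> bool" where
  "irreducible_mat M \<longleftrightarrow> square_mat M \<and> nonneg_mat M \<and>
     (\<forall>i<dim_row M. \<forall>j<dim_row M. \<exists>m\<ge>1. (M ^\<^sub>m m) $$ (i,j) > 0)"

definition primitive_mat :: "real mat \<Rightarrow> bool" where
  "primitive_mat M \<longleftrightarrow> square_mat M \<and> nonneg_mat M \<and>
     (\<exists>m\<ge>1. \<forall>i<dim_row M. \<forall>j<dim_row M. (M ^\<^sub>m m) $$ (i,j) > 0)"

definition left_stochastic :: "real mat \<Rightarrow> bool" where
  "left_stochastic M \<longleftrightarrow> (\<forall>k<dim_col M. (\<Sum>i<dim_row M. M $$ (i,k)) = 1)"

definition perron_vec :: "real mat \<Rightarrow> real vec" where
  "perron_vec M = (THE p. p \<in> carrier_vec (dim_row M) \<and> M *\<^sub>v p = p \<and>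
      (\<Sum>i<dim_vec p. p $ i) = 1 \<and> (\<forall>i<dim_vec p. p $ i > 0))"

definition perron_block :: "real mat \<Rightarrow> real mat" where
  "perron_block M = mat (dim_row M) (dim_row M) (\<lambda>(i,k). perron_vec M $ i)"

definition blk_off :: "nat list \<Rightarrow> nat \<Rightarrow> nat" where
  "blk_off Ns j = sum_list (take j Ns)"

definition diag_blk :: "real mat \<Rightarrow> nat list \<Rightarrow> nat \<Rightarrow> real mat" where
  "diag_blk M Ns j = mat (Ns ! j) (Ns ! j) (\<lambda>(i,k). M $$ (blk_off Ns j + i, blk_off Ns j + k))"

definition block_upper_tri :: "real mat \<Rightarrow> nat list \<Rightarrow> bool" where
  "block_upper_tri M Ns \<longleftrightarrow> (\<forall>j1<length Ns. \<forall>j2<j1. \<forall>i<Ns ! j1. \<forall>k<Ns ! j2.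
      M $$ (blk_off Ns j1 + i, blk_off Ns j2 + k) = 0)"

end

theory Submission
  imports Defs "Jordan_Normal_Form.Determinant"
begin

lemma mult_entry:
  assumes "A \<in> carrier_mat n m" "B \<in> carrier_mat m p" "i < n" "j < p"
  shows "(A*B)$$(i,j) = (\<Sum>k<m. A$$(i,k)*B$$(k,j))"
  using assms by (auto simp: scalar_prod_def lessThan_atLeast0 intro!: sum.cong)

lemma pow_mat_add:
  assumes "A \<in> carrier_mat n n"
  shows "A ^\<^sub>m (a+b) = A ^\<^sub>m a * A ^\<^sub>m b"
proof (induct b)
  case 0 then show ?case using assms by simp
next
  case (Suc b)
  have "A ^\<^sub>m (a + Suc b) = (A ^\<^sub>m a * A ^\<^sub>m b) * A" using Suc by simp
  also have "\<dots> = A ^\<^sub>m a * (A ^\<^sub>m b * A)"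
    using assms by (intro assoc_mult_mat) auto
  finally show ?case by simp
qed

lemma pow_mat_Suc_left:
  assumes "A \<in> carrier_mat n n"
  shows "A ^\<^sub>m Suc k = A * A ^\<^sub>m k"
  using pow_mat_add[OF assms, of 1 k] assms by simp

definition nn :: "nat \<Rightarrow> real mat \<Rightarrow> bool" where
  "nn n M \<longleftrightarrow> (\<forall>i<n. \<forall>j<n. M $$ (i,j) \<ge> 0)"

lemma nn_mult:
  assumes "A \<in> carrier_mat n n" "B \<in> carrier_mat n n" "nn n A" "nn n B"
  shows "nn n (A*B)"
  unfolding nn_def
proof (intro allI impI)
  fix i j assume ij: "i<n" "j<n"
  show "0 \<le> (A*B) $$ (i,j)"
    unfolding mult_entry[OF assms(1,2) ij] using assms ij by (auto simp: nn_def intro!: sum_nonneg)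
qed

lemma nn_pow:
  assumes "A \<in> carrier_mat n n" "nn n A"
  shows "nn n (A ^\<^sub>m k)"
proof (induct k)
  case 0 then show ?case using assms by (auto simp: nn_def)
next
  case (Suc k) then show ?case using nn_mult[OF _ assms(1) _ assms(2)] assms by simp
qed

definition cs :: "nat \<Rightarrow> real mat \<Rightarrow> nat \<Rightarrow> real" where
  "cs n M k = (\<Sum>i<n. M $$ (i,k))"

lemma cs_mult:
  assumes "A \<in> carrier_mat n n" "B \<in> carrier_mat n n" "k < n"
  shows "cs n (A*B) k = (\<Sum>j<n. cs n A j * B $$ (j,k))"
proof -
  have "cs n (A*B) k = (\<Sum>i<n. \<Sum>j<n. A$$(i,j)*B$$(j,k))"
    unfolding cs_def using assms by (intro sum.cong refl mult_entry[OF assms(1,2)]) auto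
  also have "\<dots> = (\<Sum>j<n. \<Sum>i<n. A$$(i,j)*B$$(j,k))" by (rule sum.swap)
  also have "\<dots> = (\<Sum>j<n. cs n A j * B $$ (j,k))"
    unfolding cs_def by (simp add: sum_distrib_right)
  finally show ?thesis .
qed

definition st :: "nat \<Rightarrow> real mat \<Rightarrow> bool" where
  "st n M \<longleftrightarrow> (\<forall>k<n. cs n M k = 1)"

lemma st_mult:
  assumes "A \<in> carrier_mat n n" "B \<in> carrier_mat n n" "st n A" "st n B"
  shows "st n (A*B)"
  using assms unfolding st_def by (auto simp: cs_mult[OF assms(1,2)]) (simp add: cs_def)

lemma st_one: "st n (1\<^sub>m n)"
proof -
  have "\<And>k. k<n \<Longrightarrow> (\<Sum>i<n. (1\<^sub>m n :: real mat) $$ (i,k)) = 1"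
  proof -
    fix k assume k: "k<n"
    have "(\<Sum>i<n. (1\<^sub>m n :: real mat) $$ (i,k)) = (\<Sum>i<n. if i = k then 1 else 0)"
      using k by (intro sum.cong) auto
    also have "\<dots> = 1" using k by simp
    finally show "(\<Sum>i<n. (1\<^sub>m n :: real mat) $$ (i,k)) = 1" .
  qed
  then show ?thesis unfolding st_def cs_def by auto
qed

lemma st_pow:
  assumes "A \<in> carrier_mat n n" "st n A"
  shows "st n (A ^\<^sub>m k)"
proof (induct k)
  case 0 then show ?case using assms st_one by simp
next
  case (Suc k) then show ?case using st_mult[OF _ assms(1) _ assms(2)] assms by simp
qed

lemma nn_st_le1:
  assumes "nn n M" "st n M" "i<n" "k<n"
  shows "M $$ (i,k) \<le> 1"
proof -
  have "M $$ (i,k) \<le> (\<Sum>i<n. M $$ (i,k))"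
    using assms by (intro member_le_sum) (auto simp: nn_def)
  then show ?thesis using assms by (auto simp: st_def cs_def)
qed

lemma tendsto_mult_right_mat:
  fixes M :: "nat \<Rightarrow> real mat"
  assumes "\<And>n. M n \<in> carrier_mat a b" "C \<in> carrier_mat b c" "M' \<in> carrier_mat a b"
    "\<And>i j. i<a \<Longrightarrow> j<b \<Longrightarrow> (\<lambda>n. M n $$ (i,j)) \<longlonglongrightarrow> M' $$ (i,j)"
    "i < a" "k < c"
  shows "(\<lambda>n. (M n * C) $$ (i,k)) \<longlonglongrightarrow> (M' * C) $$ (i,k)"
proof -
  have "(\<lambda>n. (\<Sum>j<b. M n $$(i,j) * C$$(j,k))) \<longlonglongrightarrow> (\<Sum>j<b. M' $$(i,j) * C$$(j,k))"
    by (rule tendsto_sum, rule tendsto_mult) (use assms in auto)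
  moreover have "(\<lambda>n. (M n * C) $$ (i,k)) = (\<lambda>n. (\<Sum>j<b. M n $$(i,j) * C$$(j,k)))"
    using assms by (intro ext mult_entry) auto
  moreover have "(M' * C) $$ (i,k) = (\<Sum>j<b. M' $$(i,j) * C$$(j,k))"
    using assms by (intro mult_entry) auto
  ultimately show ?thesis by simp
qed

lemma tendsto_mult_left_mat:
  fixes M :: "nat \<Rightarrow> real mat"
  assumes "\<And>n. M n \<in> carrier_mat b c" "C \<in> carrier_mat a b" "M' \<in> carrier_mat b c"
    "\<And>i j. i<b \<Longrightarrow> j<c \<Longrightarrow> (\<lambda>n. M n $$ (i,j)) \<longlonglongrightarrow> M' $$ (i,j)"
    "i < a" "k < c"
  shows "(\<lambda>n. (C * M n) $$ (i,k)) \<longlonglongrightarrow> (C * M') $$ (i,k)"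
proof -
  have "(\<lambda>n. (\<Sum>j<b. C$$(i,j) * M n $$(j,k))) \<longlonglongrightarrow> (\<Sum>j<b. C$$(i,j) * M' $$(j,k))"
    by (rule tendsto_sum, rule tendsto_mult) (use assms in auto)
  moreover have "(\<lambda>n. (C * M n) $$ (i,k)) = (\<lambda>n. (\<Sum>j<b. C$$(i,j) * M n $$(j,k)))"
    using assms by (intro ext mult_entry) auto
  moreover have "(C * M') $$ (i,k) = (\<Sum>j<b. C$$(i,j) * M' $$(j,k))"
    using assms by (intro mult_entry) auto
  ultimately show ?thesis by simp
qed


lemma convex_bounds:
  fixes x w :: "nat \<Rightarrow> real"
  assumes "\<And>j. j<n \<Longrightarrow> w j \<ge> 0" "(\<Sum>j<n. w j) = 1"
    "\<And>j. j<n \<Longrightarrow> lo \<le> x j" "\<And>j. j<n \<Longrightarrow> x j \<le> hi"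
  shows "lo \<le> (\<Sum>j<n. x j * w j)" "(\<Sum>j<n. x j * w j) \<le> hi"
proof -
  have "(\<Sum>j<n. lo * w j) \<le> (\<Sum>j<n. x j * w j)"
    using assms by (intro sum_mono mult_right_mono) auto
  then show "lo \<le> (\<Sum>j<n. x j * w j)" using assms by (simp add: sum_distrib_left[symmetric])
  have "(\<Sum>j<n. x j * w j) \<le> (\<Sum>j<n. hi * w j)"
    using assms by (intro sum_mono mult_right_mono) auto
  then show "(\<Sum>j<n. x j * w j) \<le> hi" using assms by (simp add: sum_distrib_left[symmetric])
qed

lemma contraction_bound:
  fixes x w :: "nat \<Rightarrow> real"
  assumes "\<And>j. j<n \<Longrightarrow> w j \<ge> \<delta>" "(\<Sum>j<n. w j) = 1"
    "\<And>j. j<n \<Longrightarrow> lo \<le> x j" "\<And>j. j<n \<Longrightarrow> x j \<le> hi"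
  shows "lo * (1 - n*\<delta>) + \<delta> * (\<Sum>j<n. x j) \<le> (\<Sum>j<n. x j * w j)"
    "(\<Sum>j<n. x j * w j) \<le> hi * (1 - n*\<delta>) + \<delta> * (\<Sum>j<n. x j)"
proof -
  have e: "(\<Sum>j<n. x j * w j) = (\<Sum>j<n. x j * (w j - \<delta>)) + \<delta> * (\<Sum>j<n. x j)"
    by (simp add: algebra_simps sum.distrib sum_distrib_left sum_subtractf)
  have s: "(\<Sum>j<n. (w j - \<delta>)) = 1 - n*\<delta>" using assms by (simp add: sum_subtractf)
  have "(\<Sum>j<n. lo * (w j - \<delta>)) \<le> (\<Sum>j<n. x j * (w j - \<delta>))"
    using assms by (intro sum_mono mult_right_mono) auto
  then show "lo * (1 - n*\<delta>) + \<delta> * (\<Sum>j<n. x j) \<le> (\<Sum>j<n. x j * w j)"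
    unfolding e using s by (simp add: sum_distrib_left[symmetric])
  have "(\<Sum>j<n. x j * (w j - \<delta>)) \<le> (\<Sum>j<n. hi * (w j - \<delta>))"
    using assms by (intro sum_mono mult_right_mono) auto
  then show "(\<Sum>j<n. x j * w j) \<le> hi * (1 - n*\<delta>) + \<delta> * (\<Sum>j<n. x j)"
    unfolding e using s by (simp add: sum_distrib_left[symmetric])
qed

lemma primitive_limit:
  assumes P: "P \<in> carrier_mat n n" and n: "n > 0" and nnP: "nn n P" and stP: "st n P"
    and m0: "m0 \<ge> 1" and pos: "\<And>i j. i<n \<Longrightarrow> j<n \<Longrightarrow> (P ^\<^sub>m m0) $$ (i,j) > 0"
  shows "\<exists>\<pi>. \<forall>i<n. \<forall>k<n. (\<lambda>t. (P ^\<^sub>m t) $$ (i,k)) \<longlonglongrightarrow> \<pi> i"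
proof -
  define hi where "hi t i = Max ((\<lambda>k. (P ^\<^sub>m t) $$ (i,k)) ` {..<n})" for t i
  define lo where "lo t i = Min ((\<lambda>k. (P ^\<^sub>m t) $$ (i,k)) ` {..<n})" for t i
  have fin: "finite ((\<lambda>k. (P ^\<^sub>m t) $$ (i,k)) ` {..<n})" for t i by simp
  have ne: "(\<lambda>k. (P ^\<^sub>m t) $$ (i,k)) ` {..<n} \<noteq> {}" for t i using n by auto
  have hi_ge: "(P ^\<^sub>m t) $$ (i,k) \<le> hi t i" if "k<n" for t i k
    unfolding hi_def using that by (intro Max_ge) auto
  have lo_le: "lo t i \<le> (P ^\<^sub>m t) $$ (i,k)" if "k<n" for t i k
    unfolding lo_def using that by (intro Min_le) auto
  obtain khi where khi: "\<And>t i. khi t i < n" "\<And>t i. hi t i = (P ^\<^sub>m t) $$ (i, khi t i)"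
  proof -
    have "\<forall>t i. \<exists>k<n. hi t i = (P ^\<^sub>m t) $$ (i,k)"
      using Max_in[OF fin ne] unfolding hi_def by force
    then show ?thesis using that by metis
  qed
  obtain klo where klo: "\<And>t i. klo t i < n" "\<And>t i. lo t i = (P ^\<^sub>m t) $$ (i, klo t i)"
  proof -
    have "\<forall>t i. \<exists>k<n. lo t i = (P ^\<^sub>m t) $$ (i,k)"
      using Min_in[OF fin ne] unfolding lo_def by force
    then show ?thesis using that by metis
  qed
  have nnp: "\<And>t j k. j<n \<Longrightarrow> k<n \<Longrightarrow> (P ^\<^sub>m t) $$ (j,k) \<ge> 0"
    using nn_pow[OF P nnP] unfolding nn_def by blast
  have stp: "\<And>t k. k<n \<Longrightarrow> (\<Sum>j<n. (P ^\<^sub>m t) $$ (j,k)) = 1"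
    using st_pow[OF P stP] unfolding st_def cs_def by blast
  have split: "(P ^\<^sub>m (t+s)) $$ (i,k) = (\<Sum>j<n. (P ^\<^sub>m t) $$ (i,j) * (P ^\<^sub>m s) $$ (j,k))"
    if "i<n" "k<n" for t s i k
    using pow_mat_add[OF P, of t s] mult_entry[of "P ^\<^sub>m t" n n "P ^\<^sub>m s" n i k] that P by simp
  have between: "lo t i \<le> (P ^\<^sub>m (t+s)) $$ (i,k) \<and> (P ^\<^sub>m (t+s)) $$ (i,k) \<le> hi t i"
    if "i<n" "k<n" for t s i k
    unfolding split[OF that]
    using convex_bounds[of n "\<lambda>j. (P ^\<^sub>m s) $$ (j,k)" "lo t i" "\<lambda>j. (P ^\<^sub>m t) $$ (i,j)" "hi t i"]
      nnp stp hi_ge lo_le that by auto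
  have hi_mono: "hi (t+s) i \<le> hi t i" if "i<n" for t s i
    using between[OF that khi(1), of t s] khi(2) by metis
  have lo_mono: "lo t i \<le> lo (t+s) i" if "i<n" for t s i
    using between[OF that klo(1), of t s] klo(2) by metis
  have lohi: "lo t i \<le> hi t i" if "i<n" for t i
    using lo_le[of 0 t i] hi_ge[of 0 t i] n by auto
  have hi01: "0 \<le> hi t i \<and> hi t i \<le> 1" if "i<n" for t i
    using khi(2)[of t i] nnp[OF that khi(1)] nn_st_le1[OF nn_pow[OF P nnP] st_pow[OF P stP] that khi(1)]
    by simp
  have lo01: "0 \<le> lo t i \<and> lo t i \<le> 1" if "i<n" for t i
    using klo(2)[of t i] nnp[OF that klo(1)] nn_st_le1[OF nn_pow[OF P nnP] st_pow[OF P stP] that klo(1)]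
    by simp
  define \<delta> where "\<delta> = Min ((\<lambda>(j,k). (P ^\<^sub>m m0) $$ (j,k)) ` ({..<n} \<times> {..<n}))"
  have \<delta>le: "\<delta> \<le> (P ^\<^sub>m m0) $$ (j,k)" if "j<n" "k<n" for j k
    unfolding \<delta>_def using that by (intro Min_le) auto
  have \<delta>pos: "\<delta> > 0"
  proof -
    have "\<delta> \<in> ((\<lambda>(j,k). (P ^\<^sub>m m0) $$ (j,k)) ` ({..<n} \<times> {..<n}))"
      unfolding \<delta>_def using n by (intro Min_in) auto
    then show ?thesis using pos by auto
  qed
  have nd: "n * \<delta> \<le> 1"
  proof -
    have "(\<Sum>j<n. \<delta>) \<le> (\<Sum>j<n. (P ^\<^sub>m m0) $$ (j,0))"
      using \<delta>le n by (intro sum_mono) auto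
    then show ?thesis using stp[OF n] by simp
  qed
  define q where "q = 1 - n*\<delta>"
  have q: "0 \<le> q" "q < 1" unfolding q_def using nd \<delta>pos n by auto
  have contr: "hi (t+m0) i - lo (t+m0) i \<le> q * (hi t i - lo t i)" if "i<n" for t i
  proof -
    let ?x = "\<lambda>j. (P ^\<^sub>m t) $$ (i,j)"
    have b: "lo t i * q + \<delta> * (\<Sum>j<n. ?x j) \<le> (P ^\<^sub>m (t+m0)) $$ (i,k)
       \<and> (P ^\<^sub>m (t+m0)) $$ (i,k) \<le> hi t i * q + \<delta> * (\<Sum>j<n. ?x j)" if "k<n" for k
      unfolding split[OF \<open>i<n\<close> that] q_def
      using contraction_bound[of n \<delta> "\<lambda>j. (P ^\<^sub>m m0) $$ (j,k)" "lo t i" ?x "hi t i"]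
        \<delta>le stp hi_ge lo_le that by auto
    show ?thesis using b[OF khi(1)[of "t+m0" i]] b[OF klo(1)[of "t+m0" i]] khi(2) klo(2)
      by (simp add: algebra_simps)
  qed
  show ?thesis
  proof (intro exI allI impI)
    fix i k assume i: "i<n" and k: "k<n"
    have "convergent (\<lambda>t. hi t i)"
    proof (rule Bseq_monoseq_convergent)
      show "Bseq (\<lambda>t. hi t i)" using hi01[OF i] by (intro BseqI'[of _ 1]) auto
      show "monoseq (\<lambda>t. hi t i)" unfolding monoseq_def
        using hi_mono[OF i] by (metis le_add_diff_inverse)
    qed
    then obtain h where h: "(\<lambda>t. hi t i) \<longlonglongrightarrow> h" by (auto simp: convergent_def)
    have "convergent (\<lambda>t. lo t i)"
    proof (rule Bseq_monoseq_convergent)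
      show "Bseq (\<lambda>t. lo t i)" using lo01[OF i] by (intro BseqI'[of _ 1]) auto
      show "monoseq (\<lambda>t. lo t i)" unfolding monoseq_def
        using lo_mono[OF i] by (metis le_add_diff_inverse)
    qed
    then obtain l where l: "(\<lambda>t. lo t i) \<longlonglongrightarrow> l" by (auto simp: convergent_def)
    have d1: "(\<lambda>t. hi (t+m0) i - lo (t+m0) i) \<longlonglongrightarrow> h - l"
      using LIMSEQ_ignore_initial_segment[OF h, of m0] LIMSEQ_ignore_initial_segment[OF l, of m0]
      by (intro tendsto_diff) auto
    have d2: "(\<lambda>t. q * (hi t i - lo t i)) \<longlonglongrightarrow> q * (h - l)"
      using h l by (intro tendsto_intros)
    have "h - l \<le> q * (h - l)" by (rule lim_mono[OF _ d1 d2]) (use contr[OF i] in auto)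
    moreover have "l \<le> h" by (rule lim_mono[OF _ l h]) (use lohi[OF i] in auto)
    ultimately have "h = l" using q by (smt (verit) mult_le_cancel_right1)
    have "(\<lambda>t. (P ^\<^sub>m t) $$ (i,k)) \<longlonglongrightarrow> h"
    proof (rule tendsto_sandwich[of "\<lambda>t. lo t i" _ _ "\<lambda>t. hi t i"])
      show "\<forall>\<^sub>F t in sequentially. lo t i \<le> (P ^\<^sub>m t) $$ (i, k)" using lo_le[OF k] by auto
      show "\<forall>\<^sub>F t in sequentially. (P ^\<^sub>m t) $$ (i, k) \<le> hi t i" using hi_ge[OF k] by auto
    qed (use l h \<open>h = l\<close> in auto)
    then show "(\<lambda>t. (P ^\<^sub>m t) $$ (i,k)) \<longlonglongrightarrow> lim (\<lambda>t. hi t i)" using h limI by metis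
  qed
qed


lemma mat_vec_entry:
  assumes "A \<in> carrier_mat n m" "v \<in> carrier_vec m" "i < n"
  shows "(A *\<^sub>v v) $ i = (\<Sum>j<m. A $$ (i,j) * v $ j)"
  using assms by (auto simp: scalar_prod_def lessThan_atLeast0 intro!: sum.cong)

lemma pow_Suc_entry:
  assumes "P \<in> carrier_mat n n" "i<n" "j<n"
  shows "(P ^\<^sub>m Suc t) $$ (i,j) = (\<Sum>l<n. (P ^\<^sub>m t) $$ (i,l) * P $$ (l,j))"
  unfolding pow_mat.simps by (rule mult_entry) (use assms in auto)

lemma perron_limit:
  assumes P: "P \<in> carrier_mat n n" and n: "n > 0" and prim: "primitive_mat P"
    and ls: "left_stochastic P"
  shows "\<forall>i<n. \<forall>k<n. (\<lambda>t. (P ^\<^sub>m t) $$ (i,k)) \<longlonglongrightarrow> perron_block P $$ (i,k)"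
proof -
  have nnP: "nn n P" using prim P unfolding primitive_mat_def nonneg_mat_def nn_def by auto
  have stP: "st n P" using ls P unfolding left_stochastic_def st_def cs_def by auto
  obtain m0 where m0: "m0 \<ge> 1" "\<And>i j. i<n \<Longrightarrow> j<n \<Longrightarrow> (P ^\<^sub>m m0) $$ (i,j) > 0"
    using prim P unfolding primitive_mat_def by auto
  obtain \<pi> where lim: "\<And>i k. i<n \<Longrightarrow> k<n \<Longrightarrow> (\<lambda>t. (P ^\<^sub>m t) $$ (i,k)) \<longlonglongrightarrow> \<pi> i"
    using primitive_limit[OF P n nnP stP m0] by blast
  have nnp: "\<And>t j k. j<n \<Longrightarrow> k<n \<Longrightarrow> (P ^\<^sub>m t) $$ (j,k) \<ge> 0"
    using nn_pow[OF P nnP] unfolding nn_def by blast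
  have stp: "\<And>t k. k<n \<Longrightarrow> (\<Sum>j<n. (P ^\<^sub>m t) $$ (j,k)) = 1"
    using st_pow[OF P stP] unfolding st_def cs_def by blast
  have split: "(P ^\<^sub>m (s+t)) $$ (i,k) = (\<Sum>j<n. (P ^\<^sub>m s) $$ (i,j) * (P ^\<^sub>m t) $$ (j,k))"
    if "i<n" "k<n" for t s i k
    using pow_mat_add[OF P, of s t] mult_entry[of "P ^\<^sub>m s" n n "P ^\<^sub>m t" n i k] that P by simp
  have inv: "\<pi> i = (\<Sum>j<n. (P ^\<^sub>m s) $$ (i,j) * \<pi> j)" if i: "i<n" for s i
  proof -
    have "(\<lambda>t. (P ^\<^sub>m (s+t)) $$ (i,0)) \<longlonglongrightarrow> (\<Sum>j<n. (P ^\<^sub>m s) $$ (i,j) * \<pi> j)"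
      unfolding split[OF i n]
      by (rule tendsto_sum, rule tendsto_mult) (use lim n in auto)
    moreover have "(\<lambda>t. (P ^\<^sub>m (s+t)) $$ (i,0)) \<longlonglongrightarrow> \<pi> i"
      using LIMSEQ_ignore_initial_segment[OF lim[OF i n], of s] by (simp add: add.commute)
    ultimately show ?thesis using LIMSEQ_unique by blast
  qed
  have \<pi>nn: "\<pi> j \<ge> 0" if "j<n" for j
    by (rule LIMSEQ_le_const[OF lim[OF that n]]) (use nnp that n in auto)
  have \<pi>sum: "(\<Sum>j<n. \<pi> j) = 1"
  proof -
    have "(\<lambda>t. (\<Sum>j<n. (P ^\<^sub>m t) $$ (j,0))) \<longlonglongrightarrow> (\<Sum>j<n. \<pi> j)"
      by (rule tendsto_sum) (use lim n in auto)
    then show ?thesis using stp[OF n] by (simp add: LIMSEQ_const_iff)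
  qed
  have \<pi>pos: "\<pi> i > 0" if i: "i<n" for i
  proof -
    obtain j0 where j0: "j0 < n" "\<pi> j0 > 0"
    proof (rule ccontr)
      assume "\<not> thesis"
      then have "\<forall>j<n. \<pi> j = 0" using that \<pi>nn by force
      then show False using \<pi>sum by simp
    qed
    have "0 < (P ^\<^sub>m m0) $$ (i,j0) * \<pi> j0" using m0(2)[OF i j0(1)] j0 by simp
    also have "\<dots> \<le> (\<Sum>j<n. (P ^\<^sub>m m0) $$ (i,j) * \<pi> j)"
      by (rule member_le_sum[of j0 "{..<n}" "\<lambda>j. (P ^\<^sub>m m0) $$ (i,j) * \<pi> j"])
        (use j0 nnp i \<pi>nn in auto)
    finally show ?thesis using inv[OF i, of m0] by simp
  qed
  have P1: "P ^\<^sub>m 1 = P" using P by simp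
  define v where "v = vec n \<pi>"
  have pv: "perron_vec P = v"
    unfolding perron_vec_def
  proof (rule the_equality)
    show "v \<in> carrier_vec (dim_row P) \<and> P *\<^sub>v v = v \<and> (\<Sum>i<dim_vec v. v $ i) = 1 \<and> (\<forall>i<dim_vec v. 0 < v $ i)"
    proof (intro conjI allI impI)
      show "v \<in> carrier_vec (dim_row P)" using P unfolding v_def by simp
      show "P *\<^sub>v v = v"
      proof (rule eq_vecI)
        fix i assume "i < dim_vec v"
        then have i: "i<n" unfolding v_def by simp
        have "(P *\<^sub>v v) $ i = (\<Sum>j<n. P $$ (i,j) * v $ j)"
          by (rule mat_vec_entry[OF P _ i]) (simp add: v_def)
        also have "\<dots> = (\<Sum>j<n. (P ^\<^sub>m 1) $$ (i,j) * \<pi> j)" unfolding P1 v_def by simp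
        also have "\<dots> = v $ i" using inv[OF i, of 1] i unfolding v_def by simp
        finally show "(P *\<^sub>v v) $ i = v $ i" .
      qed (use P in \<open>simp add: v_def\<close>)
      show "(\<Sum>i<dim_vec v. v $ i) = 1" using \<pi>sum unfolding v_def by simp
      fix i assume "i < dim_vec v" then show "0 < v $ i" using \<pi>pos unfolding v_def by simp
    qed
  next
    fix p assume p: "p \<in> carrier_vec (dim_row P) \<and> P *\<^sub>v p = p \<and> (\<Sum>i<dim_vec p. p $ i) = 1 \<and> (\<forall>i<dim_vec p. 0 < p $ i)"
    then have pc: "p \<in> carrier_vec n" and Pp: "P *\<^sub>v p = p" and ps: "(\<Sum>i<n. p $ i) = 1"
      using P by auto
    have fix1: "p $ i = (\<Sum>j<n. P $$ (i,j) * p $ j)" if "i<n" for i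
      using mat_vec_entry[OF P pc that] Pp by simp
    have fixt: "\<forall>i<n. p $ i = (\<Sum>j<n. (P ^\<^sub>m t) $$ (i,j) * p $ j)" for t
    proof (induct t)
      case 0
      show ?case
      proof (intro allI impI)
        fix i assume i: "i<n"
        have "(\<Sum>j<n. (P ^\<^sub>m 0) $$ (i,j) * p $ j) = (\<Sum>j<n. (if i = j then p $ j else 0))"
          using P i by (intro sum.cong) auto
        then show "p $ i = (\<Sum>j<n. (P ^\<^sub>m 0) $$ (i,j) * p $ j)" using i by simp
      qed
    next
      case (Suc t)
      show ?case
      proof (intro allI impI)
        fix i assume i: "i<n"
        have "(\<Sum>j<n. (P ^\<^sub>m Suc t) $$ (i,j) * p $ j)
            = (\<Sum>j<n. (\<Sum>l<n. (P ^\<^sub>m t) $$ (i,l) * P $$ (l,j)) * p $ j)"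
          using P i by (intro sum.cong refl arg_cong2[where f="(*)"] pow_Suc_entry) auto
        also have "\<dots> = (\<Sum>l<n. (P ^\<^sub>m t) $$ (i,l) * (\<Sum>j<n. P $$ (l,j) * p $ j))"
          unfolding sum_distrib_left sum_distrib_right
          by (subst sum.swap) (simp add: mult.assoc)
        also have "\<dots> = (\<Sum>l<n. (P ^\<^sub>m t) $$ (i,l) * p $ l)"
          using fix1 by (intro sum.cong refl) auto
        also have "\<dots> = p $ i" using Suc i by simp
        finally show "p $ i = (\<Sum>j<n. (P ^\<^sub>m Suc t) $$ (i,j) * p $ j)" by simp
      qed
    qed
    show "p = v"
    proof (rule eq_vecI)
      fix i assume "i < dim_vec v"
      then have i: "i<n" unfolding v_def by simp
      have "(\<lambda>t. (\<Sum>j<n. (P ^\<^sub>m t) $$ (i,j) * p $ j)) \<longlonglongrightarrow> (\<Sum>j<n. \<pi> i * p $ j)"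
        by (rule tendsto_sum, rule tendsto_mult) (use lim i in auto)
      then have "(\<lambda>t. p $ i) \<longlonglongrightarrow> \<pi> i"
        using fixt i ps by (simp add: sum_distrib_left[symmetric])
      then show "p $ i = v $ i" using i unfolding v_def by (simp add: LIMSEQ_const_iff)
    qed (use pc in \<open>simp add: v_def\<close>)
  qed
  show ?thesis
  proof (intro allI impI)
    fix i k assume "i<n" "k<n"
    then show "(\<lambda>t. (P ^\<^sub>m t) $$ (i,k)) \<longlonglongrightarrow> perron_block P $$ (i,k)"
      using lim P pv unfolding perron_block_def v_def by simp
  qed
qed


lemma sum_split: "(\<Sum>i<a+b. f i) = (\<Sum>i<a. f i) + (\<Sum>i<b. f (a+i::nat))"
  by (induct b) (auto simp: ac_simps)

lemma diag_sq: "\<forall>B\<in>set Bs. square_mat B \<Longrightarrow>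
  diag_block_mat Bs \<in> carrier_mat (sum_list (map dim_row Bs)) (sum_list (map dim_row Bs))"
proof -
  assume a: "\<forall>B\<in>set Bs. square_mat B"
  then have "map dim_col Bs = map dim_row Bs" by (induct Bs) auto
  then have "sum_list (map dim_col Bs) = sum_list (map dim_row Bs)" by metis
  then show ?thesis using dim_diag_block_mat[of Bs] unfolding carrier_mat_def by simp
qed

lemma diag_limit:
  assumes "\<forall>B\<in>set Bs. dim_row B > 0 \<and> primitive_mat B"
    and "left_stochastic (diag_block_mat Bs)"
  shows "\<forall>i<sum_list (map dim_row Bs). \<forall>k<sum_list (map dim_row Bs).
     (\<lambda>t. (diag_block_mat Bs ^\<^sub>m t) $$ (i,k)) \<longlonglongrightarrow> diag_block_mat (map perron_block Bs) $$ (i,k)"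
  using assms
proof (induct Bs)
  case Nil then show ?case by simp
next
  case (Cons B Bs)
  let ?n = "dim_row B"
  let ?N = "sum_list (map dim_row Bs)"
  have sqB: "square_mat B" and prB: "primitive_mat B" and nB: "?n > 0" using Cons.prems
    by (auto simp: primitive_mat_def)
  have sq: "\<forall>B\<in>set Bs. square_mat B" using Cons.prems by (auto simp: primitive_mat_def)
  have Bc: "B \<in> carrier_mat ?n ?n" using sqB by auto
  have Dc: "diag_block_mat Bs \<in> carrier_mat ?N ?N" by (rule diag_sq[OF sq])
  have PBc: "perron_block B \<in> carrier_mat ?n ?n" unfolding perron_block_def by simp
  have PDc: "diag_block_mat (map perron_block Bs) \<in> carrier_mat ?N ?N"
  proof -
    have "\<forall>B\<in>set (map perron_block Bs). square_mat B" by (auto simp: perron_block_def)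
    from diag_sq[OF this] show ?thesis by (simp add: perron_block_def o_def)
  qed
  have D: "diag_block_mat (B # Bs) = four_block_mat B (0\<^sub>m ?n ?N) (0\<^sub>m ?N ?n) (diag_block_mat Bs)"
    using carrier_matD(2)[OF Bc] carrier_matD[OF Dc] by (simp only: diag_block_mat.simps Let_def)
  have PD: "diag_block_mat (map perron_block (B # Bs)) = four_block_mat (perron_block B) (0\<^sub>m ?n ?N) (0\<^sub>m ?N ?n) (diag_block_mat (map perron_block Bs))"
    using carrier_matD[OF PBc] carrier_matD[OF PDc] by (simp only: diag_block_mat.simps Let_def list.map)
  have sqall: "\<forall>A\<in>set (B#Bs). square_mat A" using sq sqB by auto
  have sqall': "\<forall>A\<in>set (map (\<lambda>A. A ^\<^sub>m t) Bs). square_mat A" for t using sq by auto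
  have Dt: "diag_block_mat (B # Bs) ^\<^sub>m t = four_block_mat (B ^\<^sub>m t) (0\<^sub>m ?n ?N) (0\<^sub>m ?N ?n) (diag_block_mat Bs ^\<^sub>m t)" for t
  proof -
    have e: "diag_block_mat Bs ^\<^sub>m t = diag_block_mat (map (\<lambda>A. A ^\<^sub>m t) Bs)"
      by (rule diag_block_pow_mat[OF sq])
    have "diag_block_mat (B # Bs) ^\<^sub>m t = diag_block_mat (map (\<lambda>A. A ^\<^sub>m t) (B # Bs))"
      by (rule diag_block_pow_mat[OF sqall])
    also have "\<dots> = four_block_mat (B ^\<^sub>m t) (0\<^sub>m ?n ?N) (0\<^sub>m ?N ?n) (diag_block_mat Bs ^\<^sub>m t)"
      using carrier_matD(2)[OF Bc] by (simp only: diag_block_mat.simps Let_def list.map pow_mat_dim_square[OF Bc] e[symmetric] pow_mat_dim_square[OF Dc])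
    finally show ?thesis .
  qed
  have ls: "left_stochastic (diag_block_mat (B#Bs))" by fact
  note dBt = carrier_matD(2)[OF Bc]
  note dDr = carrier_matD(1)[OF Dc]
  note dDc = carrier_matD(2)[OF Dc]
  have dimD: "dim_row (diag_block_mat (B#Bs)) = ?n + ?N" "dim_col (diag_block_mat (B#Bs)) = ?n + ?N"
    unfolding D index_mat_four_block(2,3) dBt dDr dDc by simp_all
  have col1: "(\<Sum>i<?n+?N. diag_block_mat (B#Bs) $$ (i,k)) = 1" if "k < ?n+?N" for k
    using ls that dimD unfolding left_stochastic_def by metis
  have entD: "diag_block_mat (B#Bs) $$ (i,k) = (if i < ?n then if k < ?n then B $$ (i,k) else 0
           else if k < ?n then 0 else diag_block_mat Bs $$ (i - ?n, k - ?n))"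
    if "i < ?n+?N" "k < ?n+?N" for i k
    unfolding D using that by (simp add: dBt dDr dDc)
  have lsB: "left_stochastic B"
    unfolding left_stochastic_def
  proof (intro allI impI)
    fix k assume k: "k < dim_col B"
    have "1 = (\<Sum>i<?n + ?N. diag_block_mat (B#Bs) $$ (i,k))"
      using col1 k dBt by simp
    also have "\<dots> = (\<Sum>i<?n. B $$ (i,k))"
      unfolding sum_split using k dBt by (simp add: entD del: diag_block_mat.simps)
    finally show "(\<Sum>i<dim_row B. B $$ (i,k)) = 1" by simp
  qed
  have lsD: "left_stochastic (diag_block_mat Bs)"
    unfolding left_stochastic_def
  proof (intro allI impI)
    fix k assume k: "k < dim_col (diag_block_mat Bs)"
    have "1 = (\<Sum>i<?n + ?N. diag_block_mat (B#Bs) $$ (i,?n+k))"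
      using col1 k dDc by simp
    also have "\<dots> = (\<Sum>i<?N. diag_block_mat Bs $$ (i,k))"
      unfolding sum_split using k dDc by (simp add: entD del: diag_block_mat.simps)
    finally show "(\<Sum>i<dim_row (diag_block_mat Bs). diag_block_mat Bs $$ (i,k)) = 1" using dDr by simp
  qed
  have IH: "\<forall>i<?N. \<forall>k<?N. (\<lambda>t. (diag_block_mat Bs ^\<^sub>m t) $$ (i,k)) \<longlonglongrightarrow> diag_block_mat (map perron_block Bs) $$ (i,k)"
    using Cons.hyps Cons.prems(1) lsD by auto
  have BL: "\<forall>i<?n. \<forall>k<?n. (\<lambda>t. (B ^\<^sub>m t) $$ (i,k)) \<longlonglongrightarrow> perron_block B $$ (i,k)"
    by (rule perron_limit[OF Bc nB prB lsB])
  show ?case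
  proof (intro allI impI)
    fix i k assume i: "i < sum_list (map dim_row (B#Bs))" and k: "k < sum_list (map dim_row (B#Bs))"
    then have i': "i < ?n + ?N" and k': "k < ?n + ?N" by auto
    have e1: "(\<lambda>t. (diag_block_mat (B # Bs) ^\<^sub>m t) $$ (i,k)) =
      (\<lambda>t. if i < ?n then if k < ?n then (B ^\<^sub>m t) $$ (i,k) else 0
           else if k < ?n then 0 else (diag_block_mat Bs ^\<^sub>m t) $$ (i - ?n, k - ?n))"
      unfolding Dt using i' k' by (intro ext) (simp add: dBt dDr dDc)
    have e2: "diag_block_mat (map perron_block (B # Bs)) $$ (i,k) =
      (if i < ?n then if k < ?n then perron_block B $$ (i,k) else 0
           else if k < ?n then 0 else diag_block_mat (map perron_block Bs) $$ (i - ?n, k - ?n))"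
      unfolding PD using i' k' carrier_matD[OF PBc] carrier_matD[OF PDc] by simp
    show "(\<lambda>t. (diag_block_mat (B # Bs) ^\<^sub>m t) $$ (i,k)) \<longlonglongrightarrow> diag_block_mat (map perron_block (B # Bs)) $$ (i,k)"
      unfolding e1 e2 using BL IH i' k' by auto
  qed
qed


lemma blk_off_Suc: "r < length Ns \<Longrightarrow> blk_off Ns (Suc r) = blk_off Ns r + Ns ! r"
  unfolding blk_off_def by (simp add: take_Suc_conv_app_nth)

lemma blk_off_le: "r \<le> length Ns \<Longrightarrow> blk_off Ns r \<le> sum_list Ns"
proof -
  assume "r \<le> length Ns"
  have "sum_list Ns = sum_list (take r Ns) + sum_list (drop r Ns)"
    by (metis append_take_drop_id sum_list_append)
  then show ?thesis unfolding blk_off_def by simp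
qed

lemma blk_end: "r < length Ns \<Longrightarrow> blk_off Ns r + Ns ! r \<le> sum_list Ns"
  using blk_off_Suc[of r Ns] blk_off_le[of "Suc r" Ns] by simp

lemma blk_off_mono: "r1 \<le> r2 \<Longrightarrow> blk_off Ns r1 \<le> blk_off Ns r2"
proof -
  assume "r1 \<le> r2"
  then have "take r2 Ns = take r1 Ns @ take (r2 - r1) (drop r1 Ns)"
    by (metis le_add_diff_inverse take_add)
  then show ?thesis unfolding blk_off_def by (metis le_add1 sum_list_append)
qed

lemma blk_before: "r' < r \<Longrightarrow> r < length Ns \<Longrightarrow> blk_off Ns r' + Ns ! r' \<le> blk_off Ns r"
  using blk_off_Suc[of r' Ns] blk_off_mono[of "Suc r'" r Ns] by simp

lemma blk_cover: "k < sum_list Ns \<Longrightarrow> \<exists>r<length Ns. \<exists>a<Ns ! r. k = blk_off Ns r + a"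
proof (induct Ns arbitrary: k)
  case Nil then show ?case by simp
next
  case (Cons n Ns)
  show ?case
  proof (cases "k < n")
    case True
    then show ?thesis by (intro exI[of _ 0]) (auto simp: blk_off_def)
  next
    case False
    then have "k - n < sum_list Ns" using Cons.prems by simp
    then obtain r a where "r < length Ns" "a < Ns ! r" "k - n = blk_off Ns r + a" using Cons.hyps by blast
    then show ?thesis using False
      by (intro exI[of _ "Suc r"]) (auto simp: blk_off_def)
  qed
qed

lemma sub_pow_le:
  assumes M: "M \<in> carrier_mat N N" and nnM: "nn N M" and ol: "off + len \<le> N"
  defines "B \<equiv> mat len len (\<lambda>(i,k). M $$ (off+i, off+k))"
  shows "\<forall>i<len. \<forall>k<len. (B ^\<^sub>m m) $$ (i,k) \<le> (M ^\<^sub>m m) $$ (off+i, off+k)"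
proof (induct m)
  case 0 then show ?case using ol M by (auto simp: B_def)
next
  case (Suc m)
  have Bc: "B \<in> carrier_mat len len" unfolding B_def by simp
  have nnB: "nn len B" using nnM ol unfolding nn_def B_def by auto
  have nnMm: "nn N (M ^\<^sub>m m)" by (rule nn_pow[OF M nnM])
  show ?case
  proof (intro allI impI)
    fix i k assume i: "i<len" and k: "k<len"
    have "(B ^\<^sub>m Suc m) $$ (i,k) = (\<Sum>j<len. (B ^\<^sub>m m) $$ (i,j) * B $$ (j,k))"
      by (rule pow_Suc_entry[OF Bc i k])
    also have "\<dots> \<le> (\<Sum>j<len. (M ^\<^sub>m m) $$ (off+i,off+j) * M $$ (off+j,off+k))"
    proof (rule sum_mono)
      fix j assume j: "j \<in> {..<len}"
      have "B $$ (j,k) = M $$ (off+j,off+k)" using j k unfolding B_def by simp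
      moreover have "0 \<le> M $$ (off+j,off+k)" using nnM ol j k unfolding nn_def by auto
      moreover have "0 \<le> (B ^\<^sub>m m) $$ (i,j)" using nn_pow[OF Bc nnB] i j unfolding nn_def by auto
      ultimately show "(B ^\<^sub>m m) $$ (i,j) * B $$ (j,k) \<le> (M ^\<^sub>m m) $$ (off+i,off+j) * M $$ (off+j,off+k)"
        using Suc i j k by (auto intro: mult_right_mono)
    qed
    also have "\<dots> \<le> (\<Sum>j<off+len. (M ^\<^sub>m m) $$ (off+i,j) * M $$ (j,off+k))"
      unfolding sum_split[where a=off and b=len] using nnMm nnM ol i k unfolding nn_def
      by (auto intro!: sum_nonneg)
    also have "\<dots> \<le> (\<Sum>j<N. (M ^\<^sub>m m) $$ (off+i,j) * M $$ (j,off+k))"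
      by (rule sum_mono2) (use nnMm nnM ol i k in \<open>auto simp: nn_def\<close>)
    also have "\<dots> = (M ^\<^sub>m Suc m) $$ (off+i, off+k)"
      using pow_Suc_entry[OF M, of "off+i" "off+k" m] ol i k by simp
    finally show "(B ^\<^sub>m Suc m) $$ (i,k) \<le> (M ^\<^sub>m Suc m) $$ (off+i, off+k)" .
  qed
qed


lemma T_limit:
  assumes T: "T \<in> carrier_mat N N" and N: "N = sum_list Ns" and nnT: "nn N T"
    and cs1: "\<forall>k<N. cs N T k \<le> 1"
    and tri: "block_upper_tri T Ns"
    and irr: "\<forall>r<length Ns. irreducible_mat (diag_blk T Ns r)"
    and leak: "\<forall>r<length Ns. \<exists>k<Ns!r. (\<Sum>i<Ns!r. diag_blk T Ns r $$ (i,k)) < 1"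
  shows "\<forall>i<N. \<forall>k<N. (\<lambda>t. (T ^\<^sub>m t) $$ (i,k)) \<longlonglongrightarrow> 0"
proof -
  define c where "c t k = cs N (T ^\<^sub>m t) k" for t k
  have nnp: "\<And>t j k. j<N \<Longrightarrow> k<N \<Longrightarrow> (T ^\<^sub>m t) $$ (j,k) \<ge> 0"
    using nn_pow[OF T nnT] unfolding nn_def by blast
  have c_mult: "c (t+s) k = (\<Sum>j<N. c t j * (T ^\<^sub>m s) $$ (j,k))" if "k<N" for t s k
    unfolding c_def pow_mat_add[OF T] by (rule cs_mult) (use T that in auto)
  have c_nn: "c t k \<ge> 0" if "k<N" for t k unfolding c_def cs_def using nnp that by (auto intro: sum_nonneg)
  have c_le1: "c t k \<le> 1" if "k<N" for t k
    using that
  proof (induct t arbitrary: k)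
    case 0
    have "c 0 k = (\<Sum>i<N. if i = k then 1 else 0)"
      unfolding c_def cs_def using T 0 by (intro sum.cong) auto
    then show ?case using 0 by simp
  next
    case (Suc t)
    have "c (t+1) k = (\<Sum>j<N. c t j * (T ^\<^sub>m 1) $$ (j,k))" by (rule c_mult[OF Suc.prems])
    also have "\<dots> \<le> (\<Sum>j<N. T $$ (j,k))"
      using Suc nnT T c_nn by (intro sum_mono) (auto simp: nn_def intro!: mult_left_le_one_le)
    also have "\<dots> \<le> 1" using cs1 Suc.prems unfolding cs_def by auto
    finally show ?case by simp
  qed
  have c_mono: "c (t+s) k \<le> c s k" if "k<N" for t s k
  proof -
    have "c (t+s) k \<le> (\<Sum>j<N. (T ^\<^sub>m s) $$ (j,k))"
      unfolding c_mult[OF that] using c_le1 c_nn nnp that by (intro sum_mono mult_left_le_one_le) auto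
    then show ?thesis unfolding c_def cs_def .
  qed
  define leaky where "leaky k \<longleftrightarrow> (\<exists>t. c t k < 1)" for k
  have propg: "leaky k" if lj: "leaky j" and "j<N" "k<N" "(T ^\<^sub>m s) $$ (j,k) > 0" for j k s
  proof -
    obtain t where t: "c t j < 1" using lj unfolding leaky_def by auto
    have "c (t+s) k = (\<Sum>j<N. c t j * (T ^\<^sub>m s) $$ (j,k))" by (rule c_mult[OF that(3)])
    also have "\<dots> < (\<Sum>j<N. (T ^\<^sub>m s) $$ (j,k))"
    proof (rule sum_strict_mono_ex1)
      show "\<forall>x\<in>{..<N}. c t x * (T ^\<^sub>m s) $$ (x, k) \<le> (T ^\<^sub>m s) $$ (x, k)"
        using c_le1 c_nn nnp that by (auto intro!: mult_left_le_one_le)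
      show "\<exists>a\<in>{..<N}. c t a * (T ^\<^sub>m s) $$ (a, k) < (T ^\<^sub>m s) $$ (a, k)"
        using t that by (intro bexI[of _ j]) auto
    qed simp
    also have "\<dots> = c s k" unfolding c_def cs_def ..
    also have "\<dots> \<le> 1" using c_le1 that by auto
    finally show ?thesis unfolding leaky_def by blast
  qed
  have T1: "T ^\<^sub>m 1 = T" using T by simp
  have blocks: "\<forall>a<Ns!r. leaky (blk_off Ns r + a)" if "r < length Ns" for r
    using that
  proof (induct r rule: less_induct)
    case (less r)
    let ?o = "blk_off Ns r" and ?l = "Ns ! r"
    have ol: "?o + ?l \<le> N" using blk_end[OF less.prems] N by simp
    obtain k0 where k0: "k0 < ?l" "(\<Sum>i<?l. diag_blk T Ns r $$ (i,k0)) < 1" using leak less.prems by blast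
    let ?K = "?o + k0"
    have K: "?K < N" using ol k0 by simp
    have lK: "leaky ?K"
    proof (cases "c 1 ?K < 1")
      case True then show ?thesis unfolding leaky_def by blast
    next
      case False
      then have c1: "(\<Sum>i<N. T $$ (i,?K)) \<ge> 1" unfolding c_def cs_def T1 by simp
      have inj: "inj_on (\<lambda>a. ?o + a) {..<?l}" by (auto simp: inj_on_def)
      have sub: "(\<lambda>a. ?o + a) ` {..<?l} \<subseteq> {..<N}" using ol by auto
      have blk: "(\<Sum>i\<in>(\<lambda>a. ?o + a) ` {..<?l}. T $$ (i,?K)) < 1"
        using k0 by (simp add: sum.reindex[OF inj] diag_blk_def)
      have "(\<Sum>i<N. T $$ (i,?K)) = (\<Sum>i\<in>(\<lambda>a. ?o + a) ` {..<?l}. T $$ (i,?K)) + (\<Sum>i\<in>{..<N} - (\<lambda>a. ?o + a) ` {..<?l}. T $$ (i,?K))"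
        using sum.subset_diff[OF sub] by (simp add: add.commute)
      then have "(\<Sum>i\<in>{..<N} - (\<lambda>a. ?o + a) ` {..<?l}. T $$ (i,?K)) > 0" using c1 blk by linarith
      then have "\<exists>i\<in>{..<N} - (\<lambda>a. ?o + a) ` {..<?l}. T $$ (i,?K) > 0"
      proof (rule contrapos_pp)
        assume "\<not> (\<exists>i\<in>{..<N} - (\<lambda>a. ?o + a) ` {..<?l}. T $$ (i,?K) > 0)"
        then have "(\<Sum>i\<in>{..<N} - (\<lambda>a. ?o + a) ` {..<?l}. T $$ (i,?K)) \<le> 0"
          by (intro sum_nonpos) (auto simp: not_less)
        then show "\<not> (\<Sum>i\<in>{..<N} - (\<lambda>a. ?o + a) ` {..<?l}. T $$ (i,?K)) > 0" by linarith
      qed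
      then obtain i where i: "i \<in> {..<N} - (\<lambda>a. ?o + a) ` {..<?l}" "T $$ (i,?K) > 0"
        by blast
      then obtain r' a' where r': "r' < length Ns" "a' < Ns ! r'" "i = blk_off Ns r' + a'"
        using blk_cover[of i Ns] N by auto
      have "r' \<noteq> r" using i r' by auto
      moreover have "\<not> r < r'"
      proof
        assume "r < r'"
        then have "T $$ (blk_off Ns r' + a', blk_off Ns r + k0) = 0"
          using tri r' k0 unfolding block_upper_tri_def by blast
        then show False using i r' by simp
      qed
      ultimately have "r' < r" by simp
      then have "leaky i" using less.hyps[of r'] less.prems r' by auto
      then show ?thesis using propg[of i ?K 1] i K T1 by simp
    qed
    show ?case
    proof (intro allI impI)
      fix a assume a: "a < ?l"
      have ir: "irreducible_mat (diag_blk T Ns r)" using irr less.prems by blast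
      have dr: "dim_row (diag_blk T Ns r) = ?l" by (simp add: diag_blk_def)
      obtain m where m: "m \<ge> 1" "(diag_blk T Ns r ^\<^sub>m m) $$ (k0,a) > 0"
        using ir k0 a unfolding irreducible_mat_def dr by blast
      have "(diag_blk T Ns r ^\<^sub>m m) $$ (k0,a) \<le> (T ^\<^sub>m m) $$ (?o+k0, ?o+a)"
        using sub_pow_le[OF T nnT ol, of m] k0 a unfolding diag_blk_def by blast
      then show "leaky (?o + a)" using propg[OF lK K, of "?o+a" m] m ol a by simp
    qed
  qed
  have all: "leaky k" if "k<N" for k
    using blk_cover[of k Ns] that N blocks by auto
  show ?thesis
  proof (cases "N = 0")
    case True then show ?thesis by simp
  next
    case False
    then have Npos: "N > 0" by simp
    obtain tk where tk: "\<And>k. k<N \<Longrightarrow> c (tk k) k < 1" using all unfolding leaky_def by metis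
    define M where "M = Max (tk ` {..<N})"
    have tkM: "tk k \<le> M" if "k<N" for k unfolding M_def using that by (intro Max_ge) auto
    have cM: "c M k < 1" if "k<N" for k
      using c_mono[OF that, of "M - tk k" "tk k"] tkM[OF that] tk[OF that] by simp
    define q where "q = Max ((\<lambda>k. c M k) ` {..<N})"
    have q1: "q < 1"
    proof -
      have "q \<in> (\<lambda>k. c M k) ` {..<N}" unfolding q_def using Npos by (intro Max_in) auto
      then show ?thesis using cM by auto
    qed
    have cMq: "c M k \<le> q" if "k<N" for k unfolding q_def using that by (intro Max_ge) auto
    define g where "g t = Max ((\<lambda>k. c t k) ` {..<N})" for t
    have cg: "c t k \<le> g t" if "k<N" for t k unfolding g_def using that by (intro Max_ge) auto
    obtain kg where kg: "\<And>t. kg t < N" "\<And>t. g t = c t (kg t)"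
    proof -
      have "\<forall>t. \<exists>k<N. g t = c t k"
      proof
        fix t
        have "g t \<in> (\<lambda>k. c t k) ` {..<N}" unfolding g_def using Npos by (intro Max_in) auto
        then show "\<exists>k<N. g t = c t k" by auto
      qed
      then show ?thesis using that by metis
    qed
    have g_nn: "g t \<ge> 0" for t using kg c_nn by metis
    have g_mono: "g (s+t) \<le> g t" for s t using kg c_mono cg by (metis order_trans)
    have g_contr: "g (t+M) \<le> q * g t" for t
    proof -
      have "c (t+M) k \<le> q * g t" if k: "k<N" for k
      proof -
        have "c (t+M) k = (\<Sum>j<N. c t j * (T ^\<^sub>m M) $$ (j,k))" by (rule c_mult[OF k])
        also have "\<dots> \<le> (\<Sum>j<N. g t * (T ^\<^sub>m M) $$ (j,k))"
          using cg nnp k by (intro sum_mono mult_right_mono) auto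
        also have "\<dots> = g t * c M k" unfolding c_def cs_def by (simp add: sum_distrib_left)
        also have "\<dots> \<le> g t * q" using cMq[OF k] g_nn by (intro mult_left_mono) auto
        finally show ?thesis by (simp add: mult.commute)
      qed
      then show ?thesis using kg by metis
    qed
    have "convergent g"
    proof (rule Bseq_monoseq_convergent)
      have "g t \<le> 1" for t using kg c_le1 by metis
      then show "Bseq g" using g_nn by (intro BseqI'[of _ 1]) auto
      show "monoseq g" unfolding monoseq_def using g_mono by (metis le_add_diff_inverse2)
    qed
    then obtain l where l: "g \<longlonglongrightarrow> l" by (auto simp: convergent_def)
    have l1: "(\<lambda>t. g (t+M)) \<longlonglongrightarrow> l" using LIMSEQ_ignore_initial_segment[OF l] .
    have l2: "(\<lambda>t. q * g t) \<longlonglongrightarrow> q * l" using l by (intro tendsto_intros)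
    have "l \<le> q * l" by (rule lim_mono[OF _ l1 l2]) (use g_contr in auto)
    moreover have "l \<ge> 0" by (rule LIMSEQ_le_const[OF l]) (use g_nn in auto)
    ultimately have "l = 0" using q1 by (smt (verit) mult_le_cancel_right1)
    show ?thesis
    proof (intro allI impI)
      fix i k assume i: "i<N" and k: "k<N"
      have le: "(T ^\<^sub>m t) $$ (i,k) \<le> g t" for t
      proof -
        have "(T ^\<^sub>m t) $$ (i,k) \<le> c t k"
          unfolding c_def cs_def using nnp i k by (intro member_le_sum) auto
        then show ?thesis using cg[OF k, of t] by linarith
      qed
      show "(\<lambda>t. (T ^\<^sub>m t) $$ (i,k)) \<longlonglongrightarrow> 0"
        by (rule tendsto_sandwich[of "\<lambda>t. 0" _ _ g]) (use nnp i k le l \<open>l = 0\<close> in auto)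
    qed
  qed
qed


primrec Xs :: "real mat \<Rightarrow> real mat \<Rightarrow> real mat \<Rightarrow> nat \<Rightarrow> real mat" where
  "Xs D S T 0 = 0\<^sub>m (dim_row S) (dim_col S)"
| "Xs D S T (Suc n) = D ^\<^sub>m n * S + Xs D S T n * T"

lemma Xs_carrier:
  assumes "D \<in> carrier_mat a a" "S \<in> carrier_mat a b" "T \<in> carrier_mat b b"
  shows "Xs D S T n \<in> carrier_mat a b"
  using assms by (induct n) auto

lemma fix_pow:
  assumes P: "P \<in> carrier_mat n n" and fix1: "\<And>i. i<n \<Longrightarrow> p i = (\<Sum>j<n. P $$ (i,j) * p j)"
  shows "\<forall>i<n. p i = (\<Sum>j<n. (P ^\<^sub>m t) $$ (i,j) * p j)"
proof (induct t)
  case 0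
  show ?case
  proof (intro allI impI)
    fix i assume i: "i<n"
    have "(\<Sum>j<n. (P ^\<^sub>m 0) $$ (i,j) * p j) = (\<Sum>j<n. (if i = j then p j else 0))"
      using P i by (intro sum.cong) auto
    then show "p i = (\<Sum>j<n. (P ^\<^sub>m 0) $$ (i,j) * p j)" using i by simp
  qed
next
  case (Suc t)
  show ?case
  proof (intro allI impI)
    fix i assume i: "i<n"
    have "(\<Sum>j<n. (P ^\<^sub>m Suc t) $$ (i,j) * p j)
        = (\<Sum>j<n. (\<Sum>l<n. (P ^\<^sub>m t) $$ (i,l) * P $$ (l,j)) * p j)"
      using P i by (intro sum.cong refl arg_cong2[where f="(*)"] pow_Suc_entry) auto
    also have "\<dots> = (\<Sum>l<n. (P ^\<^sub>m t) $$ (i,l) * (\<Sum>j<n. P $$ (l,j) * p j))"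
      unfolding sum_distrib_left sum_distrib_right
      by (subst sum.swap) (simp add: mult.assoc)
    also have "\<dots> = (\<Sum>l<n. (P ^\<^sub>m t) $$ (i,l) * p l)"
      using fix1 by (intro sum.cong refl) auto
    also have "\<dots> = p i" using Suc i by simp
    finally show "p i = (\<Sum>j<n. (P ^\<^sub>m Suc t) $$ (i,j) * p j)" by simp
  qed
qed

lemma eps_conv:
  fixes x :: "nat \<Rightarrow> real"
  assumes "\<And>\<epsilon>. \<epsilon> > 0 \<Longrightarrow> \<exists>m N0. \<forall>n\<ge>N0. \<bar>x (n+m) - L\<bar> \<le> \<epsilon>"
  shows "x \<longlonglongrightarrow> L"
proof (rule LIMSEQ_I)
  fix r :: real assume r: "r > 0"
  obtain m N0 where mN: "\<forall>n\<ge>N0. \<bar>x (n+m) - L\<bar> \<le> r/2" using assms[of "r/2"] r by auto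
  show "\<exists>no. \<forall>n\<ge>no. norm (x n - L) < r"
  proof (intro exI allI impI)
    fix n assume "n \<ge> N0 + m"
    then have "n - m \<ge> N0" by simp
    then have "\<bar>x ((n - m) + m) - L\<bar> \<le> r/2" using mN by blast
    moreover have "(n - m) + m = n" using \<open>n \<ge> N0 + m\<close> by simp
    ultimately show "norm (x n - L) < r" using r by simp
  qed
qed


lemma four_block_TR: "dim_row P = a \<Longrightarrow> dim_col P = a \<Longrightarrow> dim_row U = b \<Longrightarrow> dim_col U = b \<Longrightarrow>
  i<a \<Longrightarrow> k<b \<Longrightarrow> four_block_mat P Q R U $$ (i, a+k) = Q $$ (i,k)"
  by simp

theorem lemma1:
  fixes As :: "real mat list"   (* A_1, ..., A_S *)
    and NsR :: "nat list"       (* N_{S+1}, ..., N_{S+R} *)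
    and TSR TRR A :: "real mat"
  defines "NgS \<equiv> sum_list (map dim_row As)"
    and "NgR \<equiv> sum_list NsR"
  assumes S_pos: "As \<noteq> []"
    and As_prim: "\<forall>As_s \<in> set As. dim_row As_s > 0 \<and> primitive_mat As_s"
    and NsR_pos: "\<forall>n \<in> set NsR. n > 0"
    and TSR_carrier: "TSR \<in> carrier_mat NgS NgR"
    and TRR_carrier: "TRR \<in> carrier_mat NgR NgR"
    and TRR_tri: "block_upper_tri TRR NsR"
    and Ar_irred: "\<forall>r < length NsR. irreducible_mat (diag_blk TRR NsR r)"
    and Ar_leak: "\<forall>r < length NsR. \<exists>k < NsR ! r.
                    (\<Sum>i < NsR ! r. diag_blk TRR NsR r $$ (i,k)) < 1"
    and A_def: "A = four_block_mat (diag_block_mat As) TSR (0\<^sub>m NgR NgS) TRR"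
    and A_nonneg: "nonneg_mat A"
    and A_stoch: "left_stochastic A"
  shows "invertible_mat (1\<^sub>m NgR - TRR) \<and>
    (let W = TSR * the (mat_inverse (1\<^sub>m NgR - TRR));
         \<Theta> = diag_block_mat (map perron_block As);
         Ainf = four_block_mat \<Theta> (\<Theta> * W) (0\<^sub>m NgR NgS) (0\<^sub>m NgR NgR)
     in \<forall>i < NgS + NgR. \<forall>k < NgS + NgR.
          (\<lambda>n. (A ^\<^sub>m n) $$ (i,k)) \<longlonglongrightarrow> Ainf $$ (i,k))"
proof -
  define D where "D = diag_block_mat As"
  define S where "S = TSR"
  define T where "T = TRR"
  define Th where "Th = diag_block_mat (map perron_block As)"
  define N where "N = NgS + NgR"
  have sqAs: "\<forall>B\<in>set As. square_mat B" using As_prim by (auto simp: primitive_mat_def)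
  have Dc: "D \<in> carrier_mat NgS NgS" unfolding D_def NgS_def by (rule diag_sq[OF sqAs])
  have Sc: "S \<in> carrier_mat NgS NgR" unfolding S_def by (rule TSR_carrier)
  have Tc: "T \<in> carrier_mat NgR NgR" unfolding T_def by (rule TRR_carrier)
  have Thc: "Th \<in> carrier_mat NgS NgS"
  proof -
    have "\<forall>B\<in>set (map perron_block As). square_mat B" by (auto simp: perron_block_def)
    from diag_sq[OF this] show ?thesis unfolding Th_def NgS_def by (simp add: perron_block_def o_def)
  qed
  note dD = carrier_matD[OF Dc] and dS = carrier_matD[OF Sc] and dT = carrier_matD[OF Tc]
    and dTh = carrier_matD[OF Thc]
  have A4: "A = four_block_mat D S (0\<^sub>m NgR NgS) T" unfolding A_def D_def S_def T_def ..
  have Ac: "A \<in> carrier_mat N N" unfolding A4 N_def using Dc Tc by simp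
  note dA = carrier_matD[OF Ac]
  have Aent: "A $$ (i,k) = (if i < NgS then if k < NgS then D $$ (i,k) else S $$ (i, k - NgS)
      else if k < NgS then 0 else T $$ (i - NgS, k - NgS))" if "i < N" "k < N" for i k
    unfolding A4 using that by (simp add: dD dT N_def)
  have nnA: "nn N A" using A_nonneg dA unfolding nonneg_mat_def nn_def by simp
  have stA: "st N A" using A_stoch dA unfolding left_stochastic_def st_def cs_def by simp
  have nnT: "nn NgR T"
    unfolding nn_def
  proof (intro allI impI)
    fix i k assume "i < NgR" "k < NgR"
    then have "A $$ (NgS+i, NgS+k) = T $$ (i,k)" using Aent[of "NgS+i" "NgS+k"] unfolding N_def by simp
    moreover have "0 \<le> A $$ (NgS+i, NgS+k)" using nnA \<open>i < NgR\<close> \<open>k < NgR\<close> unfolding nn_def N_def by simp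
    ultimately show "0 \<le> T $$ (i,k)" by simp
  qed
  have csT: "\<forall>k<NgR. cs NgR T k \<le> 1"
  proof (intro allI impI)
    fix k assume k: "k < NgR"
    have "1 = (\<Sum>i<NgS+NgR. A $$ (i, NgS+k))" using stA k unfolding st_def cs_def N_def by simp
    also have "\<dots> = (\<Sum>i<NgS. S $$ (i,k)) + (\<Sum>i<NgR. T $$ (i,k))"
      unfolding sum_split using k by (simp add: Aent N_def)
    finally have e: "1 = (\<Sum>i<NgS. S $$ (i,k)) + cs NgR T k" unfolding cs_def .
    have "0 \<le> (\<Sum>i<NgS. S $$ (i,k))"
    proof (rule sum_nonneg)
      fix i assume "i \<in> {..<NgS}"
      then have "A $$ (i, NgS+k) = S $$ (i,k)" using Aent[of i "NgS+k"] k unfolding N_def by simp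
      moreover have "0 \<le> A $$ (i, NgS+k)" using nnA \<open>i \<in> {..<NgS}\<close> k unfolding nn_def N_def by simp
      ultimately show "0 \<le> S $$ (i,k)" by simp
    qed
    then show "cs NgR T k \<le> 1" using e by linarith
  qed
  have lsD: "left_stochastic (diag_block_mat As)"
    unfolding left_stochastic_def D_def[symmetric]
  proof (intro allI impI)
    fix k assume "k < dim_col D"
    then have k: "k < NgS" using dD by simp
    have "1 = (\<Sum>i<NgS+NgR. A $$ (i, k))" using stA k unfolding st_def cs_def N_def by simp
    also have "\<dots> = (\<Sum>i<NgS. D $$ (i,k))"
      unfolding sum_split using k by (simp add: Aent N_def)
    finally show "(\<Sum>i<dim_row D. D $$ (i,k)) = 1" using dD by simp
  qed
  have Dlim: "\<And>i k. i<NgS \<Longrightarrow> k<NgS \<Longrightarrow> (\<lambda>t. (D ^\<^sub>m t) $$ (i,k)) \<longlonglongrightarrow> Th $$ (i,k)"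
    using diag_limit[OF As_prim lsD] unfolding D_def Th_def NgS_def by blast
  have Tlim: "\<And>i k. i<NgR \<Longrightarrow> k<NgR \<Longrightarrow> (\<lambda>t. (T ^\<^sub>m t) $$ (i,k)) \<longlonglongrightarrow> 0"
  proof -
    have NR: "NgR = sum_list NsR" unfolding NgR_def ..
    show "\<And>i k. i<NgR \<Longrightarrow> k<NgR \<Longrightarrow> (\<lambda>t. (T ^\<^sub>m t) $$ (i,k)) \<longlonglongrightarrow> 0"
      using T_limit[OF Tc NR nnT csT] TRR_tri Ar_irred Ar_leak unfolding T_def by blast
  qed
  define Mi where "Mi = 1\<^sub>m NgR - T"
  have Mic: "Mi \<in> carrier_mat NgR NgR" unfolding Mi_def using Tc by (simp add: minus_carrier_mat)
  have detM: "det Mi \<noteq> 0"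
  proof
    assume "det Mi = 0"
    then obtain v where v: "v \<in> carrier_vec NgR" "v \<noteq> 0\<^sub>v NgR" "Mi *\<^sub>v v = 0\<^sub>v NgR"
      using det_0_iff_vec_prod_zero[OF Mic] by blast
    have fix1: "v $ i = (\<Sum>j<NgR. T $$ (i,j) * v $ j)" if i: "i < NgR" for i
    proof -
      have "0 = (Mi *\<^sub>v v) $ i" using v(3) i by simp
      also have "\<dots> = (\<Sum>j<NgR. Mi $$ (i,j) * v $ j)" by (rule mat_vec_entry[OF Mic v(1) i])
      also have "\<dots> = (\<Sum>j<NgR. (if i = j then v $ j else 0) - T $$ (i,j) * v $ j)"
        unfolding Mi_def using i dT by (intro sum.cong refl) (auto simp: algebra_simps)
      also have "\<dots> = v $ i - (\<Sum>j<NgR. T $$ (i,j) * v $ j)"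
        using i by (simp add: sum_subtractf)
      finally show ?thesis by simp
    qed
    have fixt: "\<forall>i<NgR. v $ i = (\<Sum>j<NgR. (T ^\<^sub>m t) $$ (i,j) * v $ j)" for t
      by (rule fix_pow[OF Tc, of "\<lambda>i. v $ i"]) (use fix1 in auto)
    have "v = 0\<^sub>v NgR"
    proof (rule eq_vecI)
      fix i assume "i < dim_vec (0\<^sub>v NgR :: real vec)"
      then have i: "i < NgR" by simp
      have "(\<lambda>t. (\<Sum>j<NgR. (T ^\<^sub>m t) $$ (i,j) * v $ j)) \<longlonglongrightarrow> (\<Sum>j<NgR. 0 * v $ j)"
        by (rule tendsto_sum, rule tendsto_mult) (use Tlim i in auto)
      then have "(\<lambda>t. v $ i) \<longlonglongrightarrow> 0" using fixt i by simp
      then show "v $ i = 0\<^sub>v NgR $ i" using i by (simp add: LIMSEQ_const_iff)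
    qed (use v(1) in simp)
    then show False using v(2) by simp
  qed
  obtain Inv where Inv: "mat_inverse Mi = Some Inv"
  proof (cases "mat_inverse Mi")
    case None
    then have "Mi \<notin> Units (ring_mat TYPE(real) NgR (undefined::unit))" by (rule mat_inverse(1)[OF Mic])
    moreover have "Mi \<in> Units (ring_mat TYPE(real) NgR (undefined::unit))" by (rule det_non_zero_imp_unit[OF Mic detM])
    ultimately show ?thesis by blast
  next
    case (Some B) then show ?thesis using that by blast
  qed
  from mat_inverse(2)[OF Mic Inv] have MInv: "Mi * Inv = 1\<^sub>m NgR" and InvM: "Inv * Mi = 1\<^sub>m NgR"
    and Invc: "Inv \<in> carrier_mat NgR NgR" by auto
  have invertible: "invertible_mat (1\<^sub>m NgR - TRR)"
    unfolding invertible_mat_def inverts_mat_def T_def[symmetric] Mi_def[symmetric]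
    using MInv InvM Mic Invc by (intro conjI exI[of _ Inv]) (auto simp: square_mat.simps)
  have theInv: "the (mat_inverse (1\<^sub>m NgR - TRR)) = Inv"
    using Inv unfolding Mi_def T_def by simp
  define X where "X n = Xs D S T n" for n
  have Xc: "X n \<in> carrier_mat NgS NgR" for n unfolding X_def by (rule Xs_carrier[OF Dc Sc Tc])
  have X0: "X 0 = 0\<^sub>m NgS NgR" unfolding X_def using dS by simp
  have XSuc: "X (Suc n) = D ^\<^sub>m n * S + X n * T" for n unfolding X_def by simp
  have Apow: "A ^\<^sub>m n = four_block_mat (D ^\<^sub>m n) (X n) (0\<^sub>m NgR NgS) (T ^\<^sub>m n)" for n
  proof (induct n)
    case 0
    show ?case using dA X0 dD dT by (simp add: N_def)
  next
    case (Suc n)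
    have "A ^\<^sub>m Suc n = four_block_mat (D ^\<^sub>m n) (X n) (0\<^sub>m NgR NgS) (T ^\<^sub>m n) * four_block_mat D S (0\<^sub>m NgR NgS) T"
      using Suc A4 by simp
    also have "\<dots> = four_block_mat (D ^\<^sub>m n * D + X n * 0\<^sub>m NgR NgS) (D ^\<^sub>m n * S + X n * T)
        (0\<^sub>m NgR NgS * D + T ^\<^sub>m n * 0\<^sub>m NgR NgS) (0\<^sub>m NgR NgS * S + T ^\<^sub>m n * T)"
      by (rule mult_four_block_mat) (use Dc Sc Tc Xc in auto)
    also have "\<dots> = four_block_mat (D ^\<^sub>m Suc n) (X (Suc n)) (0\<^sub>m NgR NgS) (T ^\<^sub>m Suc n)"
    proof (rule cong_four_block_mat)
      show "D ^\<^sub>m n * D + X n * 0\<^sub>m NgR NgS = D ^\<^sub>m Suc n"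
        using right_mult_zero_mat[OF Xc[of n], of NgS] right_add_zero_mat[OF mult_carrier_mat[OF pow_carrier_mat[OF Dc, of n] Dc]] by simp
      show "D ^\<^sub>m n * S + X n * T = X (Suc n)" by (rule XSuc[symmetric])
      show "0\<^sub>m NgR NgS * D + T ^\<^sub>m n * 0\<^sub>m NgR NgS = 0\<^sub>m NgR NgS"
        using left_mult_zero_mat[OF Dc, of NgR] right_mult_zero_mat[OF pow_carrier_mat[OF Tc, of n], of NgS]
        by simp
      show "0\<^sub>m NgR NgS * S + T ^\<^sub>m n * T = T ^\<^sub>m Suc n"
        using left_mult_zero_mat[OF Sc, of NgR] left_add_zero_mat[OF mult_carrier_mat[OF pow_carrier_mat[OF Tc, of n] Tc]] by simp
    qed
    finally show ?case .
  qed
  have Aent_pow: "(A ^\<^sub>m n) $$ (i,k) = (if i < NgS then if k < NgS then (D ^\<^sub>m n) $$ (i,k) else X n $$ (i, k - NgS)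
      else if k < NgS then 0 else (T ^\<^sub>m n) $$ (i - NgS, k - NgS))" if "i < N" "k < N" for n i k
    unfolding Apow using that dD dT by (simp add: N_def)
  have nnAp: "nn N (A ^\<^sub>m n)" for n by (rule nn_pow[OF Ac nnA])
  have stAp: "st N (A ^\<^sub>m n)" for n by (rule st_pow[OF Ac stA])
  have X01: "0 \<le> X n $$ (i,k) \<and> X n $$ (i,k) \<le> 1" if "i < NgS" "k < NgR" for n i k
  proof -
    have e: "(A ^\<^sub>m n) $$ (i, NgS + k) = X n $$ (i,k)" using Aent_pow[of i "NgS+k" n] that by (simp add: N_def)
    have "0 \<le> (A ^\<^sub>m n) $$ (i, NgS + k)" using nnAp that unfolding nn_def N_def by simp
    moreover have "(A ^\<^sub>m n) $$ (i, NgS + k) \<le> 1" by (rule nn_st_le1[OF nnAp stAp]) (use that in \<open>auto simp: N_def\<close>)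
    ultimately show ?thesis using e by simp
  qed
  have Xadd: "X (n+m) $$ (i,k) = (D ^\<^sub>m n * X m) $$ (i,k) + (X n * T ^\<^sub>m m) $$ (i,k)"
    if "i < NgS" "k < NgR" for n m i k
  proof -
    have "A ^\<^sub>m (n+m) = A ^\<^sub>m n * A ^\<^sub>m m" by (rule pow_mat_add[OF Ac])
    also have "\<dots> = four_block_mat (D ^\<^sub>m n * D ^\<^sub>m m + X n * 0\<^sub>m NgR NgS) (D ^\<^sub>m n * X m + X n * T ^\<^sub>m m)
        (0\<^sub>m NgR NgS * D ^\<^sub>m m + T ^\<^sub>m n * 0\<^sub>m NgR NgS) (0\<^sub>m NgR NgS * X m + T ^\<^sub>m n * T ^\<^sub>m m)"
      unfolding Apow by (rule mult_four_block_mat) (use Dc Sc Tc Xc in auto)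
    finally have AF: "A ^\<^sub>m (n+m) = four_block_mat (D ^\<^sub>m n * D ^\<^sub>m m + X n * 0\<^sub>m NgR NgS) (D ^\<^sub>m n * X m + X n * T ^\<^sub>m m)
        (0\<^sub>m NgR NgS * D ^\<^sub>m m + T ^\<^sub>m n * 0\<^sub>m NgR NgS) (0\<^sub>m NgR NgS * X m + T ^\<^sub>m n * T ^\<^sub>m m)" .
    have "(A ^\<^sub>m (n+m)) $$ (i, NgS + k) = (D ^\<^sub>m n * X m + X n * T ^\<^sub>m m) $$ (i,k)"
      unfolding AF by (rule four_block_TR) (use that dD dT carrier_matD[OF Xc[of n]] in auto)
    moreover have "(A ^\<^sub>m (n+m)) $$ (i, NgS + k) = X (n+m) $$ (i,k)"
      using Aent_pow[of i "NgS+k" "n+m"] that by (simp add: N_def)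
    moreover have "(D ^\<^sub>m n * X m + X n * T ^\<^sub>m m) $$ (i,k) = (D ^\<^sub>m n * X m) $$ (i,k) + (X n * T ^\<^sub>m m) $$ (i,k)"
      by (rule index_add_mat(1)) (use that carrier_matD[OF mult_carrier_mat[OF Xc[of n] pow_carrier_mat[OF Tc, of m]]] in auto)
    ultimately show ?thesis by simp
  qed
  have ThD: "Th * D = Th"
  proof (rule eq_matI)
    fix i k assume "i < dim_row Th" "k < dim_col Th"
    then have i: "i < NgS" and k: "k < NgS" using dTh by auto
    have "(\<lambda>t. (D ^\<^sub>m t * D) $$ (i,k)) \<longlonglongrightarrow> (Th * D) $$ (i,k)"
      by (rule tendsto_mult_right_mat[of _ NgS NgS _ NgS]) (use Dc Thc Dlim i k in auto)
    moreover have "(\<lambda>t. (D ^\<^sub>m t * D) $$ (i,k)) \<longlonglongrightarrow> Th $$ (i,k)"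
      using LIMSEQ_Suc[OF Dlim[OF i k]] by simp
    ultimately show "(Th * D) $$ (i,k) = Th $$ (i,k)" using LIMSEQ_unique by blast
  qed (use Dc Thc in auto)
  have ThDp: "Th * D ^\<^sub>m j = Th" for j
  proof (induct j)
    case 0 then show ?case using Thc dD by simp
  next
    case (Suc j)
    have "Th * D ^\<^sub>m Suc j = (Th * D ^\<^sub>m j) * D" using Thc Dc by (simp add: assoc_mult_mat[of _ NgS NgS _ NgS _ NgS])
    then show ?case using Suc ThD by simp
  qed
  define V where "V = Th * S"
  define L where "L = V * Inv"
  have Vc: "V \<in> carrier_mat NgS NgR" unfolding V_def using Thc Sc by simp
  have Lc: "L \<in> carrier_mat NgS NgR" unfolding L_def using Vc Invc by simp
  have LM: "L * Mi = V" unfolding L_def using Vc Invc Mic InvM by (simp add: assoc_mult_mat[of _ NgS NgR _ NgR _ NgR])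
  have LM2: "L * Mi = L - L * T" unfolding Mi_def using Lc Tc
    by (simp add: mult_minus_distrib_mat[OF Lc one_carrier_mat Tc])
  define Y where "Y m = Th * X m" for m
  have YSuc: "Y (Suc m) = V + Y m * T" for m
  proof -
    have "Y (Suc m) = Th * (D ^\<^sub>m m * S) + Th * (X m * T)"
      unfolding Y_def XSuc
      by (rule mult_add_distrib_mat[OF Thc mult_carrier_mat[OF pow_carrier_mat[OF Dc] Sc] mult_carrier_mat[OF Xc Tc]])
    also have "Th * (D ^\<^sub>m m * S) = (Th * D ^\<^sub>m m) * S" by (rule assoc_mult_mat[OF Thc pow_carrier_mat[OF Dc] Sc, symmetric])
    also have "Th * (X m * T) = (Th * X m) * T" by (rule assoc_mult_mat[OF Thc Xc Tc, symmetric])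
    finally show ?thesis unfolding ThDp V_def Y_def .
  qed
  have Yform: "Y m = L - L * T ^\<^sub>m m" for m
  proof (induct m)
    case 0
    have "L * T ^\<^sub>m 0 = L" using Lc dT by simp
    then show ?case unfolding Y_def X0 using Thc Lc by (intro eq_matI) auto
  next
    case (Suc m)
    have "Y (Suc m) = V + (L - L * T ^\<^sub>m m) * T" using YSuc Suc by simp
    also have "(L - L * T ^\<^sub>m m) * T = L * T - L * T ^\<^sub>m Suc m"
      using Lc Tc by (simp add: minus_mult_distrib_mat[OF Lc mult_carrier_mat[OF Lc pow_carrier_mat[OF Tc]] Tc] assoc_mult_mat[OF Lc pow_carrier_mat[OF Tc] Tc])
    also have "V = L - L * T" using LM LM2 by simp
    finally show ?case using Lc Tc by (intro eq_matI) auto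
  qed
  have Ylim: "(\<lambda>m. Y m $$ (i,k)) \<longlonglongrightarrow> L $$ (i,k)" if "i < NgS" "k < NgR" for i k
  proof -
    have "(\<lambda>m. (L * T ^\<^sub>m m) $$ (i,k)) \<longlonglongrightarrow> (L * 0\<^sub>m NgR NgR) $$ (i,k)"
      by (rule tendsto_mult_left_mat[of _ NgR NgR _ NgS]) (use Tc Lc Tlim that in auto)
    then have "(\<lambda>m. L $$ (i,k) - (L * T ^\<^sub>m m) $$ (i,k)) \<longlonglongrightarrow> L $$ (i,k) - 0"
      using that Lc by (intro tendsto_diff) auto
    moreover have "Y m $$ (i,k) = L $$ (i,k) - (L * T ^\<^sub>m m) $$ (i,k)" for m
      unfolding Yform using that Lc Tc by simp
    ultimately show ?thesis by simp
  qed
  have Xlim: "(\<lambda>n. X n $$ (i,k)) \<longlonglongrightarrow> L $$ (i,k)" if i: "i < NgS" and k: "k < NgR" for i k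
  proof (rule eps_conv)
    fix \<epsilon> :: real assume e: "\<epsilon> > 0"
    have cm: "(\<lambda>m. (\<Sum>j<NgR. (T ^\<^sub>m m) $$ (j,k))) \<longlonglongrightarrow> (\<Sum>j<NgR. (0::real))"
      by (rule tendsto_sum) (use Tlim k in auto)
    have e3: "\<epsilon>/3 > 0" using e by simp
    obtain no1 where no1: "\<And>n. n \<ge> no1 \<Longrightarrow> norm ((\<Sum>j<NgR. (T ^\<^sub>m n) $$ (j,k)) - (\<Sum>j<NgR. (0::real))) < \<epsilon>/3"
      using LIMSEQ_D[OF cm e3] by blast
    obtain no2 where no2: "\<And>n. n \<ge> no2 \<Longrightarrow> norm (Y n $$ (i,k) - L $$ (i,k)) < \<epsilon>/3"
      using LIMSEQ_D[OF Ylim[OF i k] e3] by blast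
    define m where "m = max no1 no2"
    have m1: "\<bar>(\<Sum>j<NgR. (T ^\<^sub>m m) $$ (j,k))\<bar> < \<epsilon>/3" using no1[of m] unfolding m_def by simp
    have m2: "\<bar>Y m $$ (i,k) - L $$ (i,k)\<bar> < \<epsilon>/3" using no2[of m] unfolding m_def by simp
    have "(\<lambda>n. (D ^\<^sub>m n * X m) $$ (i,k)) \<longlonglongrightarrow> (Th * X m) $$ (i,k)"
      by (rule tendsto_mult_right_mat[of _ NgS NgS _ NgR]) (use Dc Thc Xc Dlim i k in auto)
    then obtain N0 where N0: "\<And>n. n \<ge> N0 \<Longrightarrow> norm ((D ^\<^sub>m n * X m) $$ (i,k) - (Th * X m) $$ (i,k)) < \<epsilon>/3"
      using LIMSEQ_D[OF _ e3] by blast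
    show "\<exists>m N0. \<forall>n\<ge>N0. \<bar>X (n + m) $$ (i,k) - L $$ (i,k)\<bar> \<le> \<epsilon>"
    proof (intro exI allI impI)
      fix n assume n: "n \<ge> N0"
      have b: "\<bar>(X n * T ^\<^sub>m m) $$ (i,k)\<bar> \<le> (\<Sum>j<NgR. (T ^\<^sub>m m) $$ (j,k))"
      proof -
        have "(X n * T ^\<^sub>m m) $$ (i,k) = (\<Sum>j<NgR. X n $$ (i,j) * (T ^\<^sub>m m) $$ (j,k))"
          by (rule mult_entry[OF Xc pow_carrier_mat[OF Tc] i k])
        moreover have "0 \<le> (\<Sum>j<NgR. X n $$ (i,j) * (T ^\<^sub>m m) $$ (j,k))"
          using X01 i nn_pow[OF Tc nnT] k by (intro sum_nonneg mult_nonneg_nonneg) (auto simp: nn_def)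
        moreover have "(\<Sum>j<NgR. X n $$ (i,j) * (T ^\<^sub>m m) $$ (j,k)) \<le> (\<Sum>j<NgR. (T ^\<^sub>m m) $$ (j,k))"
          using X01 i nn_pow[OF Tc nnT] k by (intro sum_mono mult_left_le_one_le) (auto simp: nn_def)
        ultimately show ?thesis by simp
      qed
      have "X (n+m) $$ (i,k) - L $$ (i,k) = ((D ^\<^sub>m n * X m) $$ (i,k) - (Th * X m) $$ (i,k))
          + (Y m $$ (i,k) - L $$ (i,k)) + (X n * T ^\<^sub>m m) $$ (i,k)"
        unfolding Xadd[OF i k] Y_def by simp
      show "\<bar>X (n + m) $$ (i,k) - L $$ (i,k)\<bar> \<le> \<epsilon>"
      proof -
        have "\<bar>(D ^\<^sub>m n * X m) $$ (i,k) - (Th * X m) $$ (i,k)\<bar> < \<epsilon>/3" using N0[OF n] by simp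
        then show ?thesis using \<open>X (n+m) $$ (i,k) - L $$ (i,k) = _\<close> m1 m2 b by linarith
      qed
    qed
  qed
  show ?thesis
    unfolding Let_def theInv
  proof (intro conjI invertible allI impI)
    fix i k assume i: "i < NgS + NgR" and k: "k < NgS + NgR"
    have ThW: "Th * (S * Inv) = L" unfolding L_def V_def by (rule assoc_mult_mat[OF Thc Sc Invc, symmetric])
    have Ainf: "four_block_mat Th (Th * (S * Inv)) (0\<^sub>m NgR NgS) (0\<^sub>m NgR NgR) $$ (i,k)
       = (if i < NgS then if k < NgS then Th $$ (i,k) else L $$ (i, k - NgS) else 0)"
      unfolding ThW using i k dTh by simp
    show "(\<lambda>n. (A ^\<^sub>m n) $$ (i,k)) \<longlonglongrightarrow> four_block_mat (diag_block_mat (map perron_block As)) (diag_block_mat (map perron_block As) * (TSR * Inv)) (0\<^sub>m NgR NgS) (0\<^sub>m NgR NgR) $$ (i,k)"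
      unfolding Th_def[symmetric] S_def[symmetric] Ainf
      using Aent_pow[of i k] i k Dlim[of i k] Xlim[of i "k - NgS"] Tlim[of "i - NgS" "k - NgS"]
      by (auto simp: N_def)
  qed
qed


end
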